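(* Let $\mathbb{K}$ be an algebraically closed field of characteristic zero and let $Y,Z$ be irreducible affine varieties with $Y\times\mathbb{A}^1\cong Z\times\mathbb{A}^1$. Then $Y$ and $Z$ are of the same type (A, B or C).
   Context: A derivation of $\mathbb{K}[X]$ is locally nilpotent (LND) if every element is killed by some power of it; a slice of an LND $\partial$ is $s$ with $\partial(s)=1$. $\mathrm{HD}^*(X)$ is the subalgebra of $\mathbb{K}[X]$ generated by the kernels of all LNDs of $\mathbb{K}[X]$ having a slice. A variety $Y$ is rigid if $\mathbb{K}[Y]$ has no nonzero LND. For an irreducible affine variety $Y$ with $X=Y\times\mathbb{A}^1$, $\mathbb{K}[X]=\mathbb{K}[Y][u]$: $Y$ is of type A if $\mathrm{HD}^*(X)=\mathbb{K}[X]$; of type B if $\mathrm{HD}^*(X)$ is not finitely generated; of type C if $Y$ is rigid and $\mathrm{HD}^*(X)=\mathbb{K}[Y]$. Every such $Y$ is of exactly one of these types. *)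

theory Defs
  imports "HOL-Computational_Algebra.Polynomial"
begin

definition alg_closed_field :: "'k::field itself \<Rightarrow> bool" where
  "alg_closed_field _ \<longleftrightarrow> (\<forall>p :: 'k poly. degree p \<ge> 1 \<longrightarrow> (\<exists>x. poly p x = 0))"

(* A K-algebra structure on a commutative ring 'a is given by a ring hom phi : K -> 'a *)
definition k_algebra :: "('k::field \<Rightarrow> 'a::comm_ring_1) \<Rightarrow> bool" where
  "k_algebra \<phi> \<longleftrightarrow> \<phi> 1 = 1 \<and> (\<forall>a b. \<phi> (a + b) = \<phi> a + \<phi> b) \<and> (\<forall>a b. \<phi> (a * b) = \<phi> a * \<phi> b)"

inductive_set subalg_gen :: "('k \<Rightarrow> 'a::comm_ring_1) \<Rightarrow> 'a set \<Rightarrow> 'a set"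
  for \<phi> :: "'k \<Rightarrow> 'a" and S :: "'a set" where
  gen: "x \<in> S \<Longrightarrow> x \<in> subalg_gen \<phi> S"
| scal: "\<phi> c \<in> subalg_gen \<phi> S"
| add: "x \<in> subalg_gen \<phi> S \<Longrightarrow> y \<in> subalg_gen \<phi> S \<Longrightarrow> x + y \<in> subalg_gen \<phi> S"
| neg: "x \<in> subalg_gen \<phi> S \<Longrightarrow> - x \<in> subalg_gen \<phi> S"
| mult: "x \<in> subalg_gen \<phi> S \<Longrightarrow> y \<in> subalg_gen \<phi> S \<Longrightarrow> x * y \<in> subalg_gen \<phi> S"

definition fin_gen :: "('k \<Rightarrow> 'a::comm_ring_1) \<Rightarrow> 'a set \<Rightarrow> bool" where
  "fin_gen \<phi> A \<longleftrightarrow> (\<exists>S. finite S \<and> S \<subseteq> A \<and> subalg_gen \<phi> S = A)"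

(* Coordinate ring of an irreducible affine variety: a finitely generated K-algebra
   which is an integral domain (the domain property is imposed via the type class idom) *)
definition affine_domain :: "('k::field \<Rightarrow> 'a::idom) \<Rightarrow> bool" where
  "affine_domain \<phi> \<longleftrightarrow> k_algebra \<phi> \<and> fin_gen \<phi> UNIV"

definition is_derivation :: "('k \<Rightarrow> 'a::comm_ring_1) \<Rightarrow> ('a \<Rightarrow> 'a) \<Rightarrow> bool" where
  "is_derivation \<phi> D \<longleftrightarrow>
     (\<forall>x y. D (x + y) = D x + D y) \<and>
     (\<forall>x y. D (x * y) = x * D y + y * D x) \<and>
     (\<forall>c x. D (\<phi> c * x) = \<phi> c * D x)"

definition LND :: "('k \<Rightarrow> 'a::comm_ring_1) \<Rightarrow> ('a \<Rightarrow> 'a) \<Rightarrow> bool" where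
  "LND \<phi> D \<longleftrightarrow> is_derivation \<phi> D \<and> (\<forall>x. \<exists>n. (D ^^ n) x = 0)"

definition has_slice :: "('a::comm_ring_1 \<Rightarrow> 'a) \<Rightarrow> bool" where
  "has_slice D \<longleftrightarrow> (\<exists>s. D s = 1)"

definition ker :: "('a::comm_ring_1 \<Rightarrow> 'a) \<Rightarrow> 'a set" where
  "ker D = {x. D x = 0}"

definition HDstar :: "('k \<Rightarrow> 'a::comm_ring_1) \<Rightarrow> 'a set" where
  "HDstar \<phi> = subalg_gen \<phi> (\<Union> {ker D | D. LND \<phi> D \<and> has_slice D})"

definition rigid :: "('k \<Rightarrow> 'a::comm_ring_1) \<Rightarrow> bool" where
  "rigid \<phi> \<longleftrightarrow> (\<forall>D. LND \<phi> D \<longrightarrow> D = (\<lambda>_. 0))"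

(* K-algebra structure on K[Y][u] = K[Y x A^1] *)
definition cyl :: "('k \<Rightarrow> 'a::comm_ring_1) \<Rightarrow> 'k \<Rightarrow> 'a poly" where
  "cyl \<phi> c = [:\<phi> c:]"

definition type_A :: "('k \<Rightarrow> 'a::comm_ring_1) \<Rightarrow> bool" where
  "type_A \<phi> \<longleftrightarrow> HDstar (cyl \<phi>) = UNIV"

definition type_B :: "('k \<Rightarrow> 'a::comm_ring_1) \<Rightarrow> bool" where
  "type_B \<phi> \<longleftrightarrow> \<not> fin_gen (cyl \<phi>) (HDstar (cyl \<phi>))"

definition type_C :: "('k \<Rightarrow> 'a::comm_ring_1) \<Rightarrow> bool" where
  "type_C \<phi> \<longleftrightarrow> rigid \<phi> \<and> HDstar (cyl \<phi>) = range (\<lambda>a. [:a:])"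

definition k_alg_iso :: "('k \<Rightarrow> 'a::comm_ring_1) \<Rightarrow> ('k \<Rightarrow> 'b::comm_ring_1) \<Rightarrow> ('a \<Rightarrow> 'b) \<Rightarrow> bool" where
  "k_alg_iso \<phi> \<psi> f \<longleftrightarrow> bij f \<and> (\<forall>x y. f (x + y) = f x + f y) \<and>
      (\<forall>x y. f (x * y) = f x * f y) \<and> (\<forall>c. f (\<phi> c) = \<psi> c)"

end

theory Submission
  imports Defs
begin

lemma iso_basic:
  assumes "k_alg_iso \<phi> \<psi> f"
  shows "bij f" "f (x + y) = f x + f y" "f (x * y) = f x * f y" "f (\<phi> c) = \<psi> c"
    "f 0 = 0" "f (- x) = - f x" "f 1 = 1" "inv f (f x) = x" "f (inv f z) = z"
proof -
  show b: "bij f" and a: "f (x + y) = f x + f y" and m: "f (x * y) = f x * f y"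
    and "f (\<phi> c) = \<psi> c"
    using assms unfolding k_alg_iso_def by auto
  have a': "\<And>x y. f (x + y) = f x + f y" using assms unfolding k_alg_iso_def by auto
  have m': "\<And>x y. f (x * y) = f x * f y" using assms unfolding k_alg_iso_def by auto
  have z: "f 0 = 0" using a'[of 0 0] by simp
  then show "f 0 = 0" .
  show "f (- x) = - f x" using a'[of x "-x"] z by (simp add: eq_neg_iff_add_eq_0 add.commute)
  show "inv f (f x) = x" using b by (simp add: bij_is_inj)
  have s: "\<And>y. f (inv f y) = y" using b by (simp add: bij_is_surj surj_f_inv_f)
  then show "f (inv f z) = z" .
  have "f (1 * inv f 1) = f 1 * 1" using m'[of 1 "inv f 1"] s by simp
  then show "f 1 = 1" using s by simp
qed

lemma iso_inv:
  assumes "k_alg_iso \<phi> \<psi> f"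
  shows "k_alg_iso \<psi> \<phi> (inv f)"
proof -
  note I = iso_basic[OF assms]
  have "bij (inv f)" using I(1) by (simp add: bij_imp_bij_inv)
  moreover have "inv f (x + y) = inv f x + inv f y" for x y
    by (metis I(2,8,9))
  moreover have "inv f (x * y) = inv f x * inv f y" for x y
    by (metis I(3,8,9))
  moreover have "inv f (\<psi> c) = \<phi> c" for c
    by (metis I(4,8))
  ultimately show ?thesis unfolding k_alg_iso_def by blast
qed

lemma subalg_img_sub:
  assumes "k_alg_iso \<phi> \<psi> f"
  shows "f ` subalg_gen \<phi> S \<subseteq> subalg_gen \<psi> (f ` S)"
proof
  note I = iso_basic[OF assms]
  fix y assume "y \<in> f ` subalg_gen \<phi> S"
  then obtain x where x: "x \<in> subalg_gen \<phi> S" "y = f x" by blast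
  have "f x \<in> subalg_gen \<psi> (f ` S)" using x(1)
  proof (induction rule: subalg_gen.induct)
    case (gen x) then show ?case by (simp add: subalg_gen.gen)
  next
    case (scal c) then show ?case by (simp add: I(4) subalg_gen.scal)
  next
    case (add x y) then show ?case by (simp add: I(2) subalg_gen.add)
  next
    case (neg x) then show ?case by (simp add: I(6) subalg_gen.neg)
  next
    case (mult x y) then show ?case by (simp add: I(3) subalg_gen.mult)
  qed
  then show "y \<in> subalg_gen \<psi> (f ` S)" using x by simp
qed

lemma subalg_img:
  assumes "k_alg_iso \<phi> \<psi> f"
  shows "f ` subalg_gen \<phi> S = subalg_gen \<psi> (f ` S)"
proof
  show "f ` subalg_gen \<phi> S \<subseteq> subalg_gen \<psi> (f ` S)" by (rule subalg_img_sub[OF assms])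
  note I = iso_basic[OF assms]
  have ii: "inv f ` f ` S = S" using I(8) by (simp add: image_image)
  have "inv f ` subalg_gen \<psi> (f ` S) \<subseteq> subalg_gen \<phi> S"
    using subalg_img_sub[OF iso_inv[OF assms], of "f ` S"] ii by simp
  show "subalg_gen \<psi> (f ` S) \<subseteq> f ` subalg_gen \<phi> S"
  proof
    fix z assume "z \<in> subalg_gen \<psi> (f ` S)"
    then have "inv f z \<in> subalg_gen \<phi> S" using \<open>inv f ` subalg_gen \<psi> (f ` S) \<subseteq> subalg_gen \<phi> S\<close> by blast
    then show "z \<in> f ` subalg_gen \<phi> S" using I(9)[of z] by (metis imageI)
  qed
qed

lemma subalg_mono:
  assumes "S \<subseteq> T"
  shows "subalg_gen \<phi> S \<subseteq> subalg_gen \<phi> T"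
proof
  fix x assume "x \<in> subalg_gen \<phi> S"
  then show "x \<in> subalg_gen \<phi> T"
    by (induction rule: subalg_gen.induct)
      (use assms in \<open>auto intro: subalg_gen.intros\<close>)
qed

lemma conj_pow:
  assumes "k_alg_iso \<phi> \<psi> f"
  shows "((\<lambda>y. f (D (inv f y))) ^^ n) y = f ((D ^^ n) (inv f y))"
proof (induction n arbitrary: y)
  case 0 then show ?case using iso_basic(9)[OF assms] by simp
next
  case (Suc n) then show ?case using iso_basic(8)[OF assms] by simp
qed

lemma HD_sub:
  assumes "k_alg_iso \<phi> \<psi> f"
  shows "f ` HDstar \<phi> \<subseteq> HDstar \<psi>"
proof -
  note I = iso_basic[OF assms]
  have "f ` (\<Union> {ker D | D. LND \<phi> D \<and> has_slice D}) \<subseteq> \<Union> {ker D | D. LND \<psi> D \<and> has_slice D}"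
  proof
    fix y assume "y \<in> f ` (\<Union> {ker D | D. LND \<phi> D \<and> has_slice D})"
    then obtain x D where xD: "y = f x" "D x = 0" "LND \<phi> D" "has_slice D"
      unfolding ker_def by blast
    define D' where "D' = (\<lambda>y. f (D (inv f y)))"
    have der: "is_derivation \<phi> D" and nil: "\<And>x. \<exists>n. (D ^^ n) x = 0"
      using xD(3) unfolding LND_def by auto
    have "is_derivation \<psi> D'"
      unfolding is_derivation_def D'_def
    proof (intro conjI allI)
      fix a b
      show "f (D (inv f (a + b))) = f (D (inv f a)) + f (D (inv f b))"
        using der iso_inv[OF assms] unfolding is_derivation_def k_alg_iso_def
        by (simp add: I(2))
      show "f (D (inv f (a * b))) = a * f (D (inv f b)) + b * f (D (inv f a))"
        using der iso_inv[OF assms] unfolding is_derivation_def k_alg_iso_def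
        by (simp add: I(2,3,9))
    next
      fix c a
      have e1: "inv f (\<psi> c * a) = \<phi> c * inv f a"
        using iso_inv[OF assms] unfolding k_alg_iso_def by simp
      have e2: "D (\<phi> c * inv f a) = \<phi> c * D (inv f a)"
        using der unfolding is_derivation_def by blast
      show "f (D (inv f (\<psi> c * a))) = \<psi> c * f (D (inv f a))"
        unfolding e1 e2 by (simp add: I(3,4))
    qed
    moreover have "\<exists>n. (D' ^^ n) z = 0" for z
    proof -
      obtain n where "(D ^^ n) (inv f z) = 0" using nil by blast
      then show ?thesis unfolding D'_def using conj_pow[OF assms, where D=D and n=n and y=z] I(5) by auto
    qed
    ultimately have "LND \<psi> D'" unfolding LND_def by blast
    moreover have "has_slice D'"
    proof -
      obtain s where "D s = 1" using xD(4) unfolding has_slice_def by blast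
      then have "D' (f s) = 1" unfolding D'_def using I(7,8) by simp
      then show ?thesis unfolding has_slice_def by blast
    qed
    moreover have "y \<in> ker D'" unfolding ker_def D'_def using xD I(5,8) by simp
    ultimately show "y \<in> \<Union> {ker D | D. LND \<psi> D \<and> has_slice D}" by blast
  qed
  then have h1: "subalg_gen \<psi> (f ` (\<Union> {ker D | D. LND \<phi> D \<and> has_slice D})) \<subseteq> HDstar \<psi>"
    unfolding HDstar_def
    by (rule subalg_mono)
  have h2: "f ` HDstar \<phi> = subalg_gen \<psi> (f ` (\<Union> {ker D | D. LND \<phi> D \<and> has_slice D}))"
    unfolding HDstar_def by (rule subalg_img[OF assms])
  show ?thesis unfolding h2 by (rule h1)
qed

lemma LND_conj:
  assumes "k_alg_iso \<phi> \<psi> f" "LND \<phi> D"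
  shows "LND \<psi> (\<lambda>y. f (D (inv f y)))"
proof -
  note I = iso_basic[OF assms(1)]
  define D' where "D' = (\<lambda>y. f (D (inv f y)))"
  have der: "is_derivation \<phi> D" and nil: "\<And>x. \<exists>n. (D ^^ n) x = 0"
    using assms(2) unfolding LND_def by auto
  have "is_derivation \<psi> D'"
    unfolding is_derivation_def D'_def
  proof (intro conjI allI)
    fix a b
    show "f (D (inv f (a + b))) = f (D (inv f a)) + f (D (inv f b))"
      using der iso_inv[OF assms(1)] unfolding is_derivation_def k_alg_iso_def
      by (simp add: I(2))
    show "f (D (inv f (a * b))) = a * f (D (inv f b)) + b * f (D (inv f a))"
      using der iso_inv[OF assms(1)] unfolding is_derivation_def k_alg_iso_def
      by (simp add: I(2,3,9))
  next
    fix c a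
    have e1: "inv f (\<psi> c * a) = \<phi> c * inv f a"
      using iso_inv[OF assms(1)] unfolding k_alg_iso_def by simp
    have e2: "D (\<phi> c * inv f a) = \<phi> c * D (inv f a)"
      using der unfolding is_derivation_def by blast
    show "f (D (inv f (\<psi> c * a))) = \<psi> c * f (D (inv f a))"
      unfolding e1 e2 by (simp add: I(3,4))
  qed
  moreover have "\<exists>n. (D' ^^ n) z = 0" for z
  proof -
    obtain n where "(D ^^ n) (inv f z) = 0" using nil by blast
    then show ?thesis unfolding D'_def
      using conj_pow[OF assms(1), where D=D and n=n and y=z] I(5) by auto
  qed
  ultimately show ?thesis unfolding LND_def D'_def by blast
qed

lemma HD_eq:
  assumes "k_alg_iso \<phi> \<psi> f"
  shows "HDstar \<psi> = f ` HDstar \<phi>"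
proof
  show "f ` HDstar \<phi> \<subseteq> HDstar \<psi>" by (rule HD_sub[OF assms])
  show "HDstar \<psi> \<subseteq> f ` HDstar \<phi>"
  proof
    fix z assume "z \<in> HDstar \<psi>"
    then have "inv f z \<in> HDstar \<phi>" using HD_sub[OF iso_inv[OF assms]] by blast
    then show "z \<in> f ` HDstar \<phi>" using iso_basic(9)[OF assms, of z] by (metis imageI)
  qed
qed

lemma fin_gen_transfer:
  assumes "k_alg_iso \<phi> \<psi> f" "fin_gen \<phi> H"
  shows "fin_gen \<psi> (f ` H)"
proof -
  obtain S where S: "finite S" "S \<subseteq> H" "subalg_gen \<phi> S = H"
    using assms(2) unfolding fin_gen_def by blast
  have "finite (f ` S)" "f ` S \<subseteq> f ` H" "subalg_gen \<psi> (f ` S) = f ` H"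
    using S subalg_img[OF assms(1), of S] by auto
  then show ?thesis unfolding fin_gen_def by blast
qed

lemma AB_transfer:
  assumes "k_alg_iso (cyl \<phi>) (cyl \<psi>) f"
  shows "(type_A \<phi> \<longleftrightarrow> type_A \<psi>) \<and> (type_B \<phi> \<longleftrightarrow> type_B \<psi>)"
proof -
  note I = iso_basic[OF assms]
  have H: "HDstar (cyl \<psi>) = f ` HDstar (cyl \<phi>)" by (rule HD_eq[OF assms])
  have H2: "HDstar (cyl \<phi>) = inv f ` HDstar (cyl \<psi>)" by (rule HD_eq[OF iso_inv[OF assms]])
  have A: "type_A \<phi> \<longleftrightarrow> type_A \<psi>"
  proof -
    have s1: "f ` UNIV = UNIV" using I(1) by (simp add: bij_is_surj)
    have s2: "inv f ` UNIV = UNIV" using I(1) by (simp add: bij_is_surj bij_imp_bij_inv)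
    show ?thesis unfolding type_A_def using H H2 s1 s2 by auto
  qed
  have B: "type_B \<phi> \<longleftrightarrow> type_B \<psi>"
    unfolding type_B_def using H H2 fin_gen_transfer[OF assms] fin_gen_transfer[OF iso_inv[OF assms]]
    by metis
  show ?thesis using A B by blast
qed

lemma pderiv_nil_aux:
  fixes p :: "'a::idom poly"
  shows "(\<forall>i\<ge>n. coeff p i = 0) \<Longrightarrow> (pderiv ^^ n) p = 0"
proof (induction n arbitrary: p)
  case 0 then show ?case by (simp add: poly_eqI)
next
  case (Suc n)
  have "\<forall>i\<ge>n. coeff (pderiv p) i = 0" using Suc.prems by (simp add: coeff_pderiv)
  then have "(pderiv ^^ n) (pderiv p) = 0" by (rule Suc.IH)
  then show ?case by (simp add: funpow_Suc_right del: funpow.simps)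
qed

lemma pderiv_LND:
  fixes \<phi> :: "'k \<Rightarrow> 'a::idom"
  shows "LND (cyl \<phi>) pderiv"
proof -
  have "is_derivation (cyl \<phi>) pderiv"
    unfolding is_derivation_def cyl_def
    by (simp add: pderiv_add pderiv_mult pderiv_pCons pderiv_smult)
  moreover have "\<exists>n. (pderiv ^^ n) x = 0" for x :: "'a poly"
    using pderiv_nil_aux[of "Suc (degree x)" x] by (metis Suc_le_eq coeff_eq_0)
  ultimately show ?thesis unfolding LND_def by blast
qed

lemma consts_HD:
  fixes \<phi> :: "'k \<Rightarrow> 'a::idom"
  shows "range (\<lambda>a. [:a:]) \<subseteq> HDstar (cyl \<phi>)"
proof
  fix p assume "p \<in> range (\<lambda>a::'a. [:a:])"
  then obtain a where a: "p = [:a:]" by blast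
  have "has_slice (pderiv :: 'a poly \<Rightarrow> 'a poly)"
    unfolding has_slice_def by (rule exI[of _ "[:0,1:]"]) (simp add: pderiv_pCons)
  moreover have "p \<in> ker pderiv" unfolding ker_def a by (simp add: pderiv_pCons)
  ultimately have "p \<in> \<Union> {ker D | D. LND (cyl \<phi>) D \<and> has_slice D}"
    using pderiv_LND[of \<phi>] by blast
  then show "p \<in> HDstar (cyl \<phi>)" unfolding HDstar_def by (rule subalg_gen.gen)
qed

lemma der_formula:
  fixes D :: "'b::idom poly \<Rightarrow> 'b poly"
  assumes add: "\<And>x y. D (x + y) = D x + D y"
    and mul: "\<And>x y. D (x * y) = x * D y + y * D x"
    and c: "\<And>b. D [:b:] = 0"
  shows "D p = pderiv p * D [:0,1:]"
proof (induction p)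
  case 0
  have "D 0 = D 0 + D 0" using add[of 0 0] by simp
  then have "D 0 = 0" by (metis add_cancel_right_right)
  then show ?case by simp
next
  case (pCons a p)
  have e: "pCons a p = [:a:] + [:0,1:] * p" by (simp add: poly_eqI coeff_pCons split: nat.split)
  have "D (pCons a p) = [:0,1:] * D p + p * D [:0,1:]" unfolding e add mul c by simp
  also have "... = pderiv (pCons a p) * D [:0,1:]"
    using pCons.IH by (simp add: pderiv_pCons algebra_simps)
  finally show ?case .
qed

lemma ofnat_hom:
  assumes "k_algebra (\<psi> :: 'k::field_char_0 \<Rightarrow> 'b::idom)"
  shows "\<psi> (of_nat n) = of_nat n"
proof (induction n)
  case 0
  have "\<psi> 0 = \<psi> 0 + \<psi> 0" using assms unfolding k_algebra_def by (metis add_0)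
  then show ?case by (metis add_cancel_right_right of_nat_0)
next
  case (Suc n) then show ?case using assms unfolding k_algebra_def by simp
qed

lemma ofnat_nz:
  assumes "k_algebra (\<psi> :: 'k::field_char_0 \<Rightarrow> 'b::idom)" "n > 0"
  shows "(of_nat n :: 'b) \<noteq> 0"
proof
  assume h: "(of_nat n :: 'b) = 0"
  have nz: "(of_nat n :: 'k) \<noteq> 0" using assms(2) by simp
  have "\<psi> (of_nat n * inverse (of_nat n)) = \<psi> (of_nat n) * \<psi> (inverse (of_nat n))"
    using assms(1) unfolding k_algebra_def by blast
  then have "\<psi> 1 = 0" using nz h ofnat_hom[OF assms(1), of n] by simp
  then show False using assms(1) unfolding k_algebra_def by simp
qed

lemma pderiv_nz:
  assumes "k_algebra (\<psi> :: 'k::field_char_0 \<Rightarrow> 'b::idom)" "degree (p :: 'b poly) \<ge> 1"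
  shows "pderiv p \<noteq> 0"
proof
  assume "pderiv p = 0"
  then have "coeff (pderiv p) (degree p - 1) = 0" by simp
  then have "of_nat (degree p) * lead_coeff p = 0"
    using assms(2) by (simp add: coeff_pderiv)
  moreover have "(of_nat (degree p) :: 'b) \<noteq> 0" using ofnat_nz[OF assms(1)] assms(2) by simp
  moreover have "lead_coeff p \<noteq> 0" using assms(2) by auto
  ultimately show False by simp
qed

lemma C_transfer:
  fixes \<phi> :: "'k::field_char_0 \<Rightarrow> 'a::idom" and \<psi> :: "'k \<Rightarrow> 'b::idom"
  assumes iso: "k_alg_iso (cyl \<phi>) (cyl \<psi>) f" and kb: "k_algebra \<psi>" and tc: "type_C \<phi>"
  shows "type_C \<psi>"
proof -
  note I = iso_basic[OF iso]
  note J = iso_basic[OF iso_inv[OF iso]]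
  have HA: "HDstar (cyl \<phi>) = range (\<lambda>a. [:a:])" using tc unfolding type_C_def by blast
  have rA: "rigid \<phi>" using tc unfolding type_C_def by blast
  have HB: "HDstar (cyl \<psi>) = f ` range (\<lambda>a::'a. [:a:])" using HD_eq[OF iso] HA by simp
  have sub1: "range (\<lambda>b::'b. [:b:]) \<subseteq> f ` range (\<lambda>a::'a. [:a:])"
    using consts_HD[of \<psi>] HB by simp
  have sub2: "f ` range (\<lambda>a::'a. [:a:]) \<subseteq> range (\<lambda>b::'b. [:b:])"
  proof (rule ccontr)
    assume "\<not> f ` range (\<lambda>a::'a. [:a:]) \<subseteq> range (\<lambda>b::'b. [:b:])"
    then obtain a where na: "f [:a:] \<notin> range (\<lambda>b::'b. [:b:])" by blast
    define D where "D = (\<lambda>p. f (pderiv (inv f p)))"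
    have Dadd: "\<And>x y. D (x + y) = D x + D y" unfolding D_def
      by (simp add: J(2) pderiv_add I(2))
    have Dmul: "\<And>x y. D (x * y) = x * D y + y * D x" unfolding D_def
      by (simp add: J(3) pderiv_mult I(2) I(3) I(9))
    have Dc: "D [:b:] = 0" for b
    proof -
      obtain a' where "[:b:] = f [:a':]" using sub1 by blast
      then have "inv f [:b:] = [:a':]" using I(8) by simp
      then show ?thesis unfolding D_def by (simp add: pderiv_pCons I(5))
    qed
    have F: "\<And>p. D p = pderiv p * D [:0,1:]" by (rule der_formula[OF Dadd Dmul Dc])
    have dg: "degree (f [:a:]) \<ge> 1"
    proof (rule ccontr)
      assume "\<not> degree (f [:a:]) \<ge> 1"
      then have "degree (f [:a:]) = 0" by simp
      then have "[:coeff (f [:a:]) 0:] = f [:a:]" by (rule degree_0_id)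
      then show False using na by (metis rangeI)
    qed
    have "D (f [:a:]) = 0" unfolding D_def by (simp add: I(8) pderiv_pCons I(5))
    then have "pderiv (f [:a:]) * D [:0,1:] = 0" using F[of "f [:a:]"] by simp
    then have Dx: "D [:0,1:] = 0" using pderiv_nz[OF kb dg] by simp
    have "D (f [:0,1:]) = 1" unfolding D_def using I(7) by (simp add: I(8) pderiv_pCons one_pCons[symmetric])
    moreover have "D (f [:0,1:]) = 0" using F[of "f [:0,1:]"] Dx by simp
    ultimately show False by simp
  qed
  have HBc: "HDstar (cyl \<psi>) = range (\<lambda>b::'b. [:b:])" using HB sub1 sub2 by blast
  define g where "g = (\<lambda>a. coeff (f [:a:]) 0)"
  have fg: "f [:a:] = [:g a:]" for a
  proof -
    obtain b where "f [:a:] = [:b:]" using sub2 by blast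
    then show ?thesis unfolding g_def by simp
  qed
  have gsurj: "surj g"
  proof -
    have "b \<in> range g" for b
    proof -
      obtain a where "[:b:] = f [:a:]" using sub1 by blast
      then have "b = g a" using fg[of a] by simp
      then show ?thesis by blast
    qed
    then show ?thesis by blast
  qed
  have ginj: "inj g"
  proof (rule injI)
    fix a a' assume "g a = g a'"
    then have "f [:a:] = f [:a':]" using fg by simp
    then have "inv f (f [:a:]) = inv f (f [:a':])" by simp
    then show "a = a'" using I(8) by simp
  qed
  have gadd: "g (x + y) = g x + g y" for x y
  proof -
    have "[:g (x + y):] = f ([:x:] + [:y:])" using fg by simp
    also have "... = f [:x:] + f [:y:]" by (rule I(2))
    also have "... = [:g x + g y:]" by (simp only: fg) simp
    finally show ?thesis by simp
  qed
  have gmul: "g (x * y) = g x * g y" for x y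
  proof -
    have "[:g (x * y):] = f ([:x:] * [:y:])" using fg by (simp add: mult.commute)
    also have "... = f [:x:] * f [:y:]" by (rule I(3))
    also have "... = [:g x * g y:]" by (simp only: fg) simp
    finally show ?thesis by simp
  qed
  have gc: "g (\<phi> c) = \<psi> c" for c
  proof -
    have "[:g (\<phi> c):] = [:\<psi> c:]" using fg I(4)[of c] unfolding cyl_def by simp
    then show ?thesis by simp
  qed
  have gb: "bij g" using ginj gsurj by (simp add: bij_def)
  have giso: "k_alg_iso \<phi> \<psi> g" unfolding k_alg_iso_def using gb gadd gmul gc by blast
  note G = iso_basic[OF giso]
  have "rigid \<psi>" unfolding rigid_def
  proof (intro allI impI)
    fix D assume "LND \<psi> D"
    then have "LND \<phi> (\<lambda>y. inv g (D (inv (inv g) y)))" by (rule LND_conj[OF iso_inv[OF giso]])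
    then have "(\<lambda>y. inv g (D (g y))) = (\<lambda>_. 0)" using rA inv_inv_eq[OF gb]
      unfolding rigid_def by simp
    then have z: "inv g (D (g y)) = 0" for y by metis
    show "D = (\<lambda>_. 0)"
    proof
      fix y
      have "D y = D (g (inv g y))" using G(9) by simp
      also have "... = g (inv g (D (g (inv g y))))" using G(9) by simp
      also have "... = 0" using z G(5) by simp
      finally show "D y = 0" .
    qed
  qed
  then show ?thesis unfolding type_C_def using HBc by blast
qed

theorem corollary3:
  fixes \<phi> :: "'k::field_char_0 \<Rightarrow> 'a::idom" and \<psi> :: "'k \<Rightarrow> 'b::idom"
  assumes "alg_closed_field TYPE('k)"
    and "affine_domain \<phi>" and "affine_domain \<psi>"
    and "\<exists>f. k_alg_iso (cyl \<phi>) (cyl \<psi>) f"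
  shows "(type_A \<phi> \<longleftrightarrow> type_A \<psi>) \<and> (type_B \<phi> \<longleftrightarrow> type_B \<psi>) \<and> (type_C \<phi> \<longleftrightarrow> type_C \<psi>)"
proof -
  obtain f where f: "k_alg_iso (cyl \<phi>) (cyl \<psi>) f" using assms(4) by blast
  have ka: "k_algebra \<phi>" and kb: "k_algebra \<psi>"
    using assms(2,3) unfolding affine_domain_def by auto
  have "type_C \<phi> \<Longrightarrow> type_C \<psi>" by (rule C_transfer[OF f kb])
  moreover have "type_C \<psi> \<Longrightarrow> type_C \<phi>" by (rule C_transfer[OF iso_inv[OF f] ka])
  ultimately show ?thesis using AB_transfer[OF f] by blast
qed

end
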